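(* Let $X$ be an open Riemann surface and $G$ a finite group acting on $X$ by holomorphic automorphisms, transitively on the set of connected components of $X$, such that the stabiliser of each component acts effectively on that component; let $\pi:X\to\widetilde X=X/G$ be the quotient projection. Then a compact set $\widetilde S\subset\widetilde X$ is Runge in $\widetilde X$ if and only if $S=\pi^{-1}(\widetilde S)$ is Runge in $X$.
   Context: A compact set $S$ in an open Riemann surface $X$ is Runge if it is $\mathcal{O}(X)$-convex, i.e. for every $p\in X\setminus S$ there is a holomorphic function $h$ on $X$ with $|h(p)|>\sup_S|h|$. Under the hypotheses, $X/G$ is a connected Riemann surface and $\pi$ is holomorphic. *)

theory Defs
  imports "HOL-Complex_Analysis.Complex_Analysis" "HOL-Algebra.Group_Action"
begin

definition complex_atlas :: "'a topology \<Rightarrow> ('a set \<times> ('a \<Rightarrow> complex)) set \<Rightarrow> bool" where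
  "complex_atlas X A \<longleftrightarrow>
     \<Union>(fst ` A) = topspace X \<and>
     (\<forall>(U,\<phi>)\<in>A. openin X U \<and> open (\<phi> ` U) \<and>
        homeomorphic_map (subtopology X U) (top_of_set (\<phi> ` U)) \<phi>) \<and>
     (\<forall>(U,\<phi>)\<in>A. \<forall>(V,\<psi>)\<in>A. (\<psi> \<circ> inv_into U \<phi>) holomorphic_on (\<phi> ` (U \<inter> V)))"

text \<open>Riemann surface (connectedness not required): Hausdorff space with a complex atlas.\<close>
definition riemann_surface :: "'a topology \<Rightarrow> ('a set \<times> ('a \<Rightarrow> complex)) set \<Rightarrow> bool" where
  "riemann_surface X A \<longleftrightarrow> Hausdorff_space X \<and> complex_atlas X A"

definition open_riemann_surface :: "'a topology \<Rightarrow> ('a set \<times> ('a \<Rightarrow> complex)) set \<Rightarrow> bool" where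
  "open_riemann_surface X A \<longleftrightarrow> riemann_surface X A \<and>
     (\<forall>C\<in>connected_components_of X. \<not> compactin X C)"

definition holomorphic_fun :: "'a topology \<Rightarrow> ('a set \<times> ('a \<Rightarrow> complex)) set \<Rightarrow> ('a \<Rightarrow> complex) \<Rightarrow> bool" where
  "holomorphic_fun X A h \<longleftrightarrow> (\<forall>(U,\<phi>)\<in>A. (h \<circ> inv_into U \<phi>) holomorphic_on (\<phi> ` U))"

definition holomorphic_map ::
  "'a topology \<Rightarrow> ('a set \<times> ('a \<Rightarrow> complex)) set \<Rightarrow> 'b topology \<Rightarrow> ('b set \<times> ('b \<Rightarrow> complex)) set
   \<Rightarrow> ('a \<Rightarrow> 'b) \<Rightarrow> bool" where
  "holomorphic_map X A Y B f \<longleftrightarrow> continuous_map X Y f \<and>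
     (\<forall>(U,\<phi>)\<in>A. \<forall>(V,\<psi>)\<in>B.
        (\<psi> \<circ> f \<circ> inv_into U \<phi>) holomorphic_on (\<phi> ` (U \<inter> {x \<in> topspace X. f x \<in> V})))"

definition holomorphic_automorphism :: "'a topology \<Rightarrow> ('a set \<times> ('a \<Rightarrow> complex)) set \<Rightarrow> ('a \<Rightarrow> 'a) \<Rightarrow> bool" where
  "holomorphic_automorphism X A g \<longleftrightarrow> bij_betw g (topspace X) (topspace X) \<and>
     holomorphic_map X A X A g \<and> holomorphic_map X A X A (inv_into (topspace X) g)"

text \<open>Runge compact set: compact and O(X)-convex. Since S is compact and h continuous,
sup over S of |h| is attained, so "|h p| > sup_S |h|" is written pointwise (this also
handles S empty correctly).\<close>
definition runge :: "'a topology \<Rightarrow> ('a set \<times> ('a \<Rightarrow> complex)) set \<Rightarrow> 'a set \<Rightarrow> bool" where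
  "runge X A S \<longleftrightarrow> compactin X S \<and>
     (\<forall>p \<in> topspace X - S. \<exists>h. holomorphic_fun X A h \<and> (\<forall>x\<in>S. norm (h x) < norm (h p)))"

end

theory Submission
  imports Defs "HOL-Computational_Algebra.Polynomial"
begin

lemma chart_facts:
  assumes "complex_atlas X A" "(U,\<phi>) \<in> A"
  shows "openin X U" "open (\<phi> ` U)" "homeomorphic_map (subtopology X U) (top_of_set (\<phi> ` U)) \<phi>"
    "U \<subseteq> topspace X" "inj_on \<phi> U" "\<And>x. x \<in> U \<Longrightarrow> inv_into U \<phi> (\<phi> x) = x"
proof -
  have "\<forall>(U,\<phi>)\<in>A. openin X U \<and> open (\<phi> ` U) \<and>
        homeomorphic_map (subtopology X U) (top_of_set (\<phi> ` U)) \<phi>"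
    using assms(1) unfolding complex_atlas_def by blast
  from bspec[OF this assms(2)]
  show o: "openin X U" "open (\<phi> ` U)" and h: "homeomorphic_map (subtopology X U) (top_of_set (\<phi> ` U)) \<phi>"
    by simp_all
  show s: "U \<subseteq> topspace X" using o openin_subset by blast
  have "inj_on \<phi> (topspace (subtopology X U))" using homeomorphic_imp_injective_map[OF h] .
  then show i: "inj_on \<phi> U" using s by (simp add: Int_absorb1)
  show "\<And>x. x \<in> U \<Longrightarrow> inv_into U \<phi> (\<phi> x) = x" using i by simp
qed

lemma atlas_cover:
  assumes "complex_atlas X A" "x \<in> topspace X"
  obtains U \<phi> where "(U,\<phi>) \<in> A" "x \<in> U"
proof -
  have "x \<in> \<Union>(fst ` A)" using assms unfolding complex_atlas_def by simp
  then obtain p where "p \<in> A" "x \<in> fst p" by blast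
  then show ?thesis using that[of "fst p" "snd p"] by simp
qed

lemma holmap_chart:
  assumes "holomorphic_map X A Y B f" "(U,\<phi>) \<in> A" "(V,\<psi>) \<in> B"
  shows "(\<psi> \<circ> f \<circ> inv_into U \<phi>) holomorphic_on (\<phi> ` (U \<inter> {x \<in> topspace X. f x \<in> V}))"
proof -
  have "\<forall>(U,\<phi>)\<in>A. \<forall>(V,\<psi>)\<in>B.
        (\<psi> \<circ> f \<circ> inv_into U \<phi>) holomorphic_on (\<phi> ` (U \<inter> {x \<in> topspace X. f x \<in> V}))"
    using assms(1) unfolding holomorphic_map_def by blast
  from bspec[OF this assms(2)] have "\<forall>(V,\<psi>)\<in>B.
        (\<psi> \<circ> f \<circ> inv_into U \<phi>) holomorphic_on (\<phi> ` (U \<inter> {x \<in> topspace X. f x \<in> V}))" by simp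
  from bspec[OF this assms(3)] show ?thesis by simp
qed

lemma holfun_chart:
  assumes "holomorphic_fun X A h" "(U,\<phi>) \<in> A"
  shows "(h \<circ> inv_into U \<phi>) holomorphic_on (\<phi> ` U)"
proof -
  have "\<forall>(U,\<phi>)\<in>A. (h \<circ> inv_into U \<phi>) holomorphic_on (\<phi> ` U)"
    using assms(1) unfolding holomorphic_fun_def by blast
  from bspec[OF this assms(2)] show ?thesis by simp
qed

lemma chart_open_image:
  assumes "complex_atlas X A" "(U,\<phi>) \<in> A" "openin X W" "W \<subseteq> U"
  shows "open (\<phi> ` W)"
proof -
  note c = chart_facts[OF assms(1,2)]
  have "W \<subseteq> topspace (subtopology X U)" using assms(4) c(4) by auto
  have "openin (subtopology X U) W"
    unfolding openin_subtopology using assms(3,4) by blast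
  then have "openin (top_of_set (\<phi> ` U)) (\<phi> ` W)"
    using homeomorphic_map_openness[OF c(3) \<open>W \<subseteq> topspace (subtopology X U)\<close>] by simp
  then show ?thesis using c(2) openin_open_trans by blast
qed

lemma diff_transform_open:
  assumes "open D" "z \<in> D" "\<And>z'. z' \<in> D \<Longrightarrow> g z' = f z'" "g field_differentiable at z"
  shows "f field_differentiable at z"
proof -
  obtain e where e: "e > 0" "ball z e \<subseteq> D" using assms(1,2) open_contains_ball by blast
  show ?thesis
  proof (rule field_differentiable_transform_within[of e z UNIV g f])
    show "\<And>x'. x' \<in> UNIV \<Longrightarrow> dist x' z < e \<Longrightarrow> g x' = f x'"
      using e assms(3) by (simp add: dist_commute subset_iff)
  qed (use e assms(4) in auto)
qed

lemma holfun_comp: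
  assumes AX: "complex_atlas X A" and BY: "complex_atlas Y B"
    and f: "holomorphic_map X A Y B f" and h: "holomorphic_fun Y B h"
  shows "holomorphic_fun X A (h \<circ> f)"
  unfolding holomorphic_fun_def
proof (clarify)
  fix U \<phi> assume UA: "(U,\<phi>) \<in> A"
  note c = chart_facts[OF AX UA]
  have fc: "continuous_map X Y f" using f by (simp add: holomorphic_map_def)
  show "(h \<circ> f \<circ> inv_into U \<phi>) holomorphic_on \<phi> ` U"
    unfolding holomorphic_on_open[OF c(2)]
  proof
    fix z assume "z \<in> \<phi> ` U"
    then obtain x where xU: "x \<in> U" and z: "z = \<phi> x" by blast
    have xX: "x \<in> topspace X" using xU c(4) by blast
    have "f x \<in> topspace Y" using fc xX by (simp add: continuous_map_def Pi_iff)
    then obtain V \<psi> where VB: "(V,\<psi>) \<in> B" and fxV: "f x \<in> V"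
      using atlas_cover[OF BY] by blast
    note d = chart_facts[OF BY VB]
    define W where "W = U \<inter> {x \<in> topspace X. f x \<in> V}"
    have oW: "openin X W" unfolding W_def
      by (rule openin_Int[OF c(1) openin_continuous_map_preimage[OF fc d(1)]])
    have oD: "open (\<phi> ` W)" using chart_open_image[OF AX UA oW] W_def by blast
    have zD: "z \<in> \<phi> ` W" using z xU fxV xX W_def by blast
    have h1: "(\<psi> \<circ> f \<circ> inv_into U \<phi>) holomorphic_on \<phi> ` W"
      using holmap_chart[OF f UA VB] W_def by simp
    have h2: "(h \<circ> inv_into V \<psi>) holomorphic_on \<psi> ` V"
      by (rule holfun_chart[OF h VB])
    have sub: "(\<psi> \<circ> f \<circ> inv_into U \<phi>) ` (\<phi> ` W) \<subseteq> \<psi> ` V"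
    proof
      fix t assume "t \<in> (\<psi> \<circ> f \<circ> inv_into U \<phi>) ` (\<phi> ` W)"
      then obtain x' where "x' \<in> W" "t = \<psi> (f (inv_into U \<phi> (\<phi> x')))" by auto
      then show "t \<in> \<psi> ` V" using c(6)[of x'] W_def by auto
    qed
    have hc: "((h \<circ> inv_into V \<psi>) \<circ> (\<psi> \<circ> f \<circ> inv_into U \<phi>)) holomorphic_on \<phi> ` W"
      by (rule holomorphic_on_compose_gen[OF h1 h2 sub])
    have eq: "((h \<circ> inv_into V \<psi>) \<circ> (\<psi> \<circ> f \<circ> inv_into U \<phi>)) z' = (h \<circ> f \<circ> inv_into U \<phi>) z'"
      if zW: "z' \<in> \<phi> ` W" for z'
    proof -
      obtain x' where "x' \<in> W" "z' = \<phi> x'" using zW by auto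
      then have "x' \<in> U" "f x' \<in> V" using W_def by auto
      then have "inv_into U \<phi> z' = x'" "inv_into V \<psi> (\<psi> (f x')) = f x'"
        using c(6)[of x'] d(6)[of "f x'"] \<open>z' = \<phi> x'\<close> by auto
      then show ?thesis by (simp add: o_def)
    qed
    define G' where "G' = (h \<circ> inv_into V \<psi>) \<circ> (\<psi> \<circ> f \<circ> inv_into U \<phi>)"
    have "((h \<circ> inv_into V \<psi>) \<circ> (\<psi> \<circ> f \<circ> inv_into U \<phi>)) field_differentiable at z"
    proof -
      have "\<forall>x\<in>\<phi> ` W. \<exists>f'. (((h \<circ> inv_into V \<psi>) \<circ> (\<psi> \<circ> f \<circ> inv_into U \<phi>)) has_field_derivative f') (at x)"
        using hc holomorphic_on_open[OF oD] by simp
      then obtain f' where "(((h \<circ> inv_into V \<psi>) \<circ> (\<psi> \<circ> f \<circ> inv_into U \<phi>)) has_field_derivative f') (at z)"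
        using zD by blast
      then show ?thesis unfolding field_differentiable_def by blast
    qed
    then have "G' field_differentiable at z" unfolding G'_def .
    then have "(h \<circ> f \<circ> inv_into U \<phi>) field_differentiable at z"
      proof -
      define G where "G = (h \<circ> inv_into V \<psi>) \<circ> (\<psi> \<circ> f \<circ> inv_into U \<phi>)"
      define F where "F = h \<circ> f \<circ> inv_into U \<phi>"
      have "\<And>z'. z' \<in> \<phi> ` W \<Longrightarrow> G z' = F z'" using eq unfolding G_def F_def by blast
      moreover have "G field_differentiable at z" using \<open>G' field_differentiable at z\<close>[unfolded G'_def] G_def by simp
      ultimately show ?thesis using diff_transform_open[OF oD zD] unfolding F_def by blast
    qed
    then show "\<exists>f'. ((h \<circ> f \<circ> inv_into U \<phi>) has_field_derivative f') (at z)"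
      unfolding field_differentiable_def .
  qed
qed

lemma holfun_cont:
  assumes AX: "complex_atlas X A" and h: "holomorphic_fun X A h"
  shows "continuous_map X euclidean h"
  unfolding continuous_map_def
proof (intro conjI allI impI)
  show "h \<in> topspace X \<rightarrow> topspace euclidean" by simp
  fix Q :: "complex set" assume "openin euclidean Q"
  then have oQ: "open Q" by simp
  have eqU: "{x \<in> topspace X. h x \<in> Q} = (\<Union>p\<in>A. {x \<in> fst p. h x \<in> Q})"
  proof (rule Set.set_eqI)
    fix x
    show "x \<in> {x \<in> topspace X. h x \<in> Q} \<longleftrightarrow> x \<in> (\<Union>p\<in>A. {x \<in> fst p. h x \<in> Q})"
    proof
      assume "x \<in> {x \<in> topspace X. h x \<in> Q}"
      then obtain U \<phi> where "(U,\<phi>) \<in> A" "x \<in> U" "h x \<in> Q" using atlas_cover[OF AX] by blast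
      then show "x \<in> (\<Union>p\<in>A. {x \<in> fst p. h x \<in> Q})" by force
    next
      assume "x \<in> (\<Union>p\<in>A. {x \<in> fst p. h x \<in> Q})"
      then obtain p where "p \<in> A" "x \<in> fst p" "h x \<in> Q" by blast
      then show "x \<in> {x \<in> topspace X. h x \<in> Q}"
        using chart_facts(4)[OF AX, of "fst p" "snd p"] by auto
    qed
  qed
  have op: "openin X {x \<in> U. h x \<in> Q}" if UA: "(U,\<phi>) \<in> A" for U \<phi>
  proof -
    note c = chart_facts[OF AX UA]
    have hc: "continuous_on (\<phi> ` U) (h \<circ> inv_into U \<phi>)"
      by (rule holomorphic_on_imp_continuous_on[OF holfun_chart[OF h UA]])
    define T where "T = (h \<circ> inv_into U \<phi>) -` Q \<inter> \<phi> ` U"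
    have oT: "open T" unfolding T_def using hc c(2) oQ continuous_on_open_vimage by blast
    have cm: "continuous_map (subtopology X U) (top_of_set (\<phi> ` U)) \<phi>"
      by (rule homeomorphic_imp_continuous_map[OF c(3)])
    have "T \<subseteq> \<phi> ` U" unfolding T_def by blast
    then have "openin (top_of_set (\<phi> ` U)) T" using oT openin_open_eq[OF c(2)] by simp
    then have o1: "openin (subtopology X U) {x \<in> topspace (subtopology X U). \<phi> x \<in> T}"
      by (rule openin_continuous_map_preimage[OF cm])
    have "{x \<in> topspace (subtopology X U). \<phi> x \<in> T} = {x \<in> U. h x \<in> Q}"
    proof (rule Set.set_eqI)
      fix x show "x \<in> {x \<in> topspace (subtopology X U). \<phi> x \<in> T} \<longleftrightarrow> x \<in> {x \<in> U. h x \<in> Q}"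
        using c(4) c(6)[of x] T_def by auto
    qed
    with o1 show ?thesis using openin_trans_full[OF _ c(1)] by simp
  qed
  have "openin X (\<Union>p\<in>A. {x \<in> fst p. h x \<in> Q})"
  proof (rule openin_Union, clarify)
    fix p assume "p \<in> A" then show "openin X {x \<in> fst p. h x \<in> Q}" using op[of "fst p" "snd p"] by simp
  qed
  then show "openin X {x \<in> topspace X. h x \<in> Q}" using eqU by simp
qed

lemma coeff_lin_mult: fixes a :: "'a::comm_ring_1" shows "coeff ([:a, 1:] * P) k = a * coeff P k + (case k of 0 \<Rightarrow> 0 | Suc j \<Rightarrow> coeff P j)"
  by (simp add: mult.commute[of "[:a,1:]"] coeff_pCons split: nat.split)

lemma coeff_prod_insert:
  fixes c :: "'g \<Rightarrow> 'a::comm_ring_1"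
  assumes "finite T" "g \<notin> T"
  shows "coeff (\<Prod>i\<in>insert g T. [:- c i, 1:]) k =
     - c g * coeff (\<Prod>i\<in>T. [:- c i, 1:]) k + (case k of 0 \<Rightarrow> 0 | Suc j \<Rightarrow> coeff (\<Prod>i\<in>T. [:- c i, 1:]) j)"
  unfolding prod.insert[OF assms] by (rule coeff_lin_mult)

lemma degree_prod_lin:
  assumes "finite T"
  shows "degree (\<Prod>i\<in>T. [:- c i, 1::'a::comm_ring_1:]) \<le> card T"
proof -
  have "degree (\<Prod>i\<in>T. [:- c i, 1::'a:]) \<le> sum (degree \<circ> (\<lambda>i. [:- c i, 1:])) T"
    by (rule degree_prod_sum_le[OF assms])
  also have "\<dots> \<le> sum (\<lambda>i. 1) T" by (rule sum_mono) simp
  finally show ?thesis by simp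
qed

lemma coeff_prod_lin_top:
  assumes "finite T"
  shows "coeff (\<Prod>i\<in>T. [:- c i, 1::'a::comm_ring_1:]) (card T) = 1"
  using assms
proof (induction T rule: finite_induct)
  case empty then show ?case by simp
next
  case (insert g T)
  have "coeff (\<Prod>i\<in>T. [:- c i, 1::'a:]) (Suc (card T)) = 0"
    using degree_prod_lin[OF insert(1), of c] by (simp add: coeff_eq_0)
  then show ?case using insert coeff_prod_insert[OF insert(1,2), of c "Suc (card T)"] by simp
qed

lemma coeff_prod_lin_bound:
  fixes c :: "'g \<Rightarrow> complex"
  assumes "finite T" "\<And>g. g \<in> T \<Longrightarrow> norm (c g) \<le> \<rho>"
  shows "norm (coeff (\<Prod>i\<in>T. [:- c i, 1:]) k) \<le> coeff ([:\<rho>, 1:] ^ card T) k"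
  using assms
proof (induction T arbitrary: k rule: finite_induct)
  case empty then show ?case by simp
next
  case (insert g T)
  define P where "P = (\<Prod>i\<in>T. [:- c i, 1:])"
  define Q where "Q = [:\<rho>, 1:] ^ card T"
  have IH: "\<And>k. norm (coeff P k) \<le> coeff Q k" unfolding P_def Q_def using insert by auto
  have cg: "norm (c g) \<le> \<rho>" using insert by auto
  have rho0: "0 \<le> \<rho>" using cg norm_ge_zero order_trans by blast
  have Q0: "\<And>k. 0 \<le> coeff Q k" using IH norm_ge_zero order_trans by blast
  have e1: "coeff (\<Prod>i\<in>insert g T. [:- c i, 1:]) k = - c g * coeff P k + (case k of 0 \<Rightarrow> 0 | Suc j \<Rightarrow> coeff P j)"
    unfolding P_def by (rule coeff_prod_insert[OF insert(1,2)])
  have e2: "coeff ([:\<rho>, 1:] ^ card (insert g T)) k = \<rho> * coeff Q k + (case k of 0 \<Rightarrow> 0 | Suc j \<Rightarrow> coeff Q j)"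
    unfolding Q_def card_insert_disjoint[OF insert(1,2)] power_Suc by (rule coeff_lin_mult)
  have "norm (- c g * coeff P k) \<le> \<rho> * coeff Q k"
    using cg IH[of k] rho0 by (simp add: norm_mult mult_mono)
  moreover have "norm (case k of 0 \<Rightarrow> 0 | Suc j \<Rightarrow> coeff P j) \<le> (case k of 0 \<Rightarrow> 0 | Suc j \<Rightarrow> coeff Q j)"
    using IH by (simp split: nat.split)
  ultimately show ?case unfolding e1 e2 by (meson norm_triangle_le add_mono)
qed

lemma poly_sum_upto:
  fixes p :: "'a::comm_ring_1 poly"
  assumes "degree p \<le> n"
  shows "poly p x = (\<Sum>i\<le>n. coeff p i * x ^ i)"
proof -
  have "poly p x = (\<Sum>i\<le>degree p. coeff p i * x ^ i)" by (rule poly_altdef)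
  also have "\<dots> = (\<Sum>i\<le>n. coeff p i * x ^ i)"
    by (rule sum.mono_neutral_left) (use assms in \<open>auto simp: coeff_eq_0\<close>)
  finally show ?thesis .
qed

lemma root_bound:
  fixes c :: "'g \<Rightarrow> complex"
  assumes T: "finite T" and g0: "g0 \<in> T" and rho: "0 \<le> \<rho>"
    and bnd: "\<And>k. k < card T \<Longrightarrow> norm (coeff (\<Prod>i\<in>T. [:- c i, 1:]) k) \<le> coeff ([:\<rho>, 1:] ^ card T) k"
  shows "2 * norm (c g0) ^ card T \<le> (norm (c g0) + \<rho>) ^ card T"
proof -
  define P where "P = (\<Prod>i\<in>T. [:- c i, 1:])"
  define Q where "Q = [:\<rho>, 1:] ^ card T"
  define m where "m = card T"
  define z where "z = c g0"
  define r where "r = norm z"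
  have "poly P z = (\<Prod>i\<in>T. poly [:- c i, 1:] z)" unfolding P_def by (rule poly_prod)
  also have "\<dots> = 0" using T g0 unfolding z_def by (auto intro: prod_zero)
  finally have P0: "poly P z = 0" .
  have dP: "degree P \<le> m" unfolding P_def m_def by (rule degree_prod_lin[OF T])
  have topP: "coeff P m = 1" unfolding P_def m_def by (rule coeff_prod_lin_top[OF T])
  have dQ: "degree Q \<le> m" unfolding Q_def m_def
    using degree_power_le[of "[:\<rho>, 1:]" "card T"] by simp
  have topQ: "coeff Q m = 1" unfolding Q_def m_def by (simp add: coeff_linear_power)
  have "0 = (\<Sum>i\<le>m. coeff P i * z ^ i)" using P0 poly_sum_upto[OF dP] by simp
  also have "\<dots> = (\<Sum>i<m. coeff P i * z ^ i) + z ^ m" using topP by (simp add: lessThan_Suc_atMost[symmetric])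
  finally have "z ^ m = - (\<Sum>i<m. coeff P i * z ^ i)" by (simp add: eq_neg_iff_add_eq_0 add.commute)
  then have "r ^ m = norm (\<Sum>i<m. coeff P i * z ^ i)" unfolding r_def by (metis norm_minus_cancel norm_power)
  also have "\<dots> \<le> (\<Sum>i<m. norm (coeff P i * z ^ i))" by (rule norm_sum)
  also have "\<dots> \<le> (\<Sum>i<m. coeff Q i * r ^ i)"
    by (rule sum_mono) (use bnd in \<open>auto simp: norm_mult norm_power r_def P_def Q_def m_def intro!: mult_right_mono\<close>)
  also have "\<dots> = poly Q r - r ^ m"
    using poly_sum_upto[OF dQ, of r] topQ by (simp add: lessThan_Suc_atMost[symmetric])
  also have "poly Q r = (\<rho> + r) ^ m" unfolding Q_def m_def by (simp add: poly_power)
  finally show ?thesis unfolding m_def r_def z_def by (simp add: add.commute)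
qed

lemma holfun_const: "holomorphic_fun X A (\<lambda>x. c)"
  unfolding holomorphic_fun_def by (auto simp: o_def)

lemma holfun_add:
  assumes "holomorphic_fun X A a" "holomorphic_fun X A b"
  shows "holomorphic_fun X A (\<lambda>x. a x + b x)"
  unfolding holomorphic_fun_def
proof clarify
  fix U \<phi> assume UA: "(U,\<phi>) \<in> A"
  have "(\<lambda>z. (a \<circ> inv_into U \<phi>) z + (b \<circ> inv_into U \<phi>) z) holomorphic_on \<phi> ` U"
    by (intro holomorphic_on_add holfun_chart[OF assms(1) UA] holfun_chart[OF assms(2) UA])
  then show "((\<lambda>x. a x + b x) \<circ> inv_into U \<phi>) holomorphic_on \<phi> ` U" by (simp add: o_def)
qed

lemma holfun_mult:
  assumes "holomorphic_fun X A a" "holomorphic_fun X A b"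
  shows "holomorphic_fun X A (\<lambda>x. a x * b x)"
  unfolding holomorphic_fun_def
proof clarify
  fix U \<phi> assume UA: "(U,\<phi>) \<in> A"
  have "(\<lambda>z. (a \<circ> inv_into U \<phi>) z * (b \<circ> inv_into U \<phi>) z) holomorphic_on \<phi> ` U"
    by (intro holomorphic_on_mult holfun_chart[OF assms(1) UA] holfun_chart[OF assms(2) UA])
  then show "((\<lambda>x. a x * b x) \<circ> inv_into U \<phi>) holomorphic_on \<phi> ` U" by (simp add: o_def)
qed

lemma holfun_power:
  assumes "holomorphic_fun X A a"
  shows "holomorphic_fun X A (\<lambda>x. a x ^ n)"
proof (induction n)
  case 0 then show ?case using holfun_const by simp
next
  case (Suc n) then show ?case using holfun_mult[OF assms Suc] by simp
qed

lemma holfun_coeff: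
  assumes "finite T" "\<And>g. g \<in> T \<Longrightarrow> holomorphic_fun X A (c g)"
  shows "holomorphic_fun X A (\<lambda>x. coeff (\<Prod>i\<in>T. [:- c i x, 1:]) k)"
  using assms
proof (induction T arbitrary: k rule: finite_induct)
  case empty then show ?case using holfun_const[of X A] by simp
next
  case (insert g T)
  have IH: "\<And>k. holomorphic_fun X A (\<lambda>x. coeff (\<Prod>i\<in>T. [:- c i x, 1:]) k)" using insert by auto
  have cg: "holomorphic_fun X A (c g)" using insert by auto
  have m: "holomorphic_fun X A (\<lambda>x. - c g x * coeff (\<Prod>i\<in>T. [:- c i x, 1:]) k)"
    by (rule holfun_mult[OF _ IH]) (use holfun_mult[OF holfun_const[of X A "-1"] cg] in simp)
  have r: "holomorphic_fun X A (\<lambda>x. (case k of 0 \<Rightarrow> 0 | Suc j \<Rightarrow> coeff (\<Prod>i\<in>T. [:- c i x, 1:]) j))"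
    by (cases k) (simp_all add: holfun_const IH)
  have e: "(\<lambda>x. coeff (\<Prod>i\<in>insert g T. [:- c i x, 1:]) k) =
    (\<lambda>x. - c g x * coeff (\<Prod>i\<in>T. [:- c i x, 1:]) k + (case k of 0 \<Rightarrow> 0 | Suc j \<Rightarrow> coeff (\<Prod>i\<in>T. [:- c i x, 1:]) j))"
  proof
    fix x show "coeff (\<Prod>i\<in>insert g T. [:- c i x, 1:]) k = - c g x * coeff (\<Prod>i\<in>T. [:- c i x, 1:]) k + (case k of 0 \<Rightarrow> 0 | Suc j \<Rightarrow> coeff (\<Prod>i\<in>T. [:- c i x, 1:]) j)"
      using coeff_prod_insert[OF insert(1,2), of "\<lambda>i. c i x" k] by simp
  qed
  show ?case unfolding e by (rule holfun_add[OF m r])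
qed

lemma descend:
  assumes AX: "complex_atlas X A" and BY: "complex_atlas Y B"
    and surj: "\<pi> ` topspace X = topspace Y"
    and hol: "holomorphic_map X A Y B \<pi>"
    and finfib: "\<And>x. x \<in> topspace X \<Longrightarrow> finite {x' \<in> topspace X. \<pi> x' = \<pi> x}"
    and u: "holomorphic_fun X A u"
    and uinv: "\<And>x x'. x \<in> topspace X \<Longrightarrow> x' \<in> topspace X \<Longrightarrow> \<pi> x = \<pi> x' \<Longrightarrow> u x = u x'"
  shows "holomorphic_fun Y B (\<lambda>y. u (inv_into (topspace X) \<pi> y))"
  unfolding holomorphic_fun_def
proof clarify
  fix V \<psi> assume VB: "(V,\<psi>) \<in> B"
  note d = chart_facts[OF BY VB]
  define F where "F = (\<lambda>y. u (inv_into (topspace X) \<pi> y)) \<circ> inv_into V \<psi>"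
  have "\<forall>\<zeta>0\<in>\<psi> ` V. F field_differentiable at \<zeta>0"
  proof
    fix \<zeta>0 assume "\<zeta>0 \<in> \<psi> ` V"
    then obtain y0 where y0V: "y0 \<in> V" and \<zeta>0: "\<zeta>0 = \<psi> y0" by blast
    have "y0 \<in> topspace Y" using y0V d(4) by blast
    then have "y0 \<in> \<pi> ` topspace X" using surj by simp
    then obtain x0 where x0X: "x0 \<in> topspace X" and px0: "\<pi> x0 = y0" by blast
    obtain U \<phi> where UA: "(U,\<phi>) \<in> A" and x0U: "x0 \<in> U" using atlas_cover[OF AX x0X] by blast
    note c = chart_facts[OF AX UA]
    have pc: "continuous_map X Y \<pi>" using hol by (simp add: holomorphic_map_def)
    define W where "W = U \<inter> {x \<in> topspace X. \<pi> x \<in> V}"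
    have oW: "openin X W" unfolding W_def
      by (rule openin_Int[OF c(1) openin_continuous_map_preimage[OF pc d(1)]])
    define D where "D = \<phi> ` W"
    have "W \<subseteq> U" unfolding W_def by blast
    have oD: "open D" unfolding D_def by (rule chart_open_image[OF AX UA oW \<open>W \<subseteq> U\<close>])
    define z0 where "z0 = \<phi> x0"
    have z0D: "z0 \<in> D" unfolding z0_def D_def W_def using x0U x0X px0 y0V by blast
    define w where "w = \<psi> \<circ> \<pi> \<circ> inv_into U \<phi>"
    have hw: "w holomorphic_on D" unfolding w_def D_def W_def by (rule holmap_chart[OF hol UA VB])
    define fh where "fh = u \<circ> inv_into U \<phi>"
    have "fh holomorphic_on \<phi> ` U" unfolding fh_def by (rule holfun_chart[OF u UA])
    then have hf: "fh holomorphic_on D" by (rule holomorphic_on_subset) (auto simp: D_def W_def)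
    have key: "w z \<in> \<psi> ` V \<and> F (w z) = fh z" if "z \<in> D" for z
    proof -
      obtain x where xW: "x \<in> W" and z: "z = \<phi> x" using \<open>z \<in> D\<close> unfolding D_def by blast
      have xU: "x \<in> U" and xX: "x \<in> topspace X" and pxV: "\<pi> x \<in> V" using xW unfolding W_def by auto
      have i1: "inv_into U \<phi> z = x" using c(6)[OF xU] z by simp
      have i2: "inv_into V \<psi> (\<psi> (\<pi> x)) = \<pi> x" using d(6)[OF pxV] .
      have pim: "\<pi> x \<in> \<pi> ` topspace X" using xX by blast
      define x' where "x' = inv_into (topspace X) \<pi> (\<pi> x)"
      have x'X: "x' \<in> topspace X" unfolding x'_def by (rule inv_into_into[OF pim])
      have px': "\<pi> x' = \<pi> x" unfolding x'_def by (rule f_inv_into_f[OF pim])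
      have "u x' = u x" using uinv[OF x'X xX px'] .
      have wz: "w z = \<psi> (\<pi> x)" unfolding w_def using i1 by simp
      have "F (w z) = u x'" unfolding wz F_def x'_def comp_def i2 ..
      moreover have "fh z = u x" unfolding fh_def comp_def i1 ..
      moreover have "w z \<in> \<psi> ` V" using wz pxV by blast
      ultimately show ?thesis using \<open>u x' = u x\<close> by simp
    qed
    have wz0: "w z0 = \<zeta>0" unfolding w_def z0_def using c(6)[OF x0U] px0 \<zeta>0 by simp
    have NC: "\<not> (\<forall>z\<in>ball z0 r. w z = \<zeta>0)" if "r > 0" "ball z0 r \<subseteq> D" for r
    proof
      assume const: "\<forall>z\<in>ball z0 r. w z = \<zeta>0"
      have "inv_into U \<phi> ` ball z0 r \<subseteq> {x' \<in> topspace X. \<pi> x' = \<pi> x0}"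
      proof
        fix t assume "t \<in> inv_into U \<phi> ` ball z0 r"
        then obtain z where zb: "z \<in> ball z0 r" and t: "t = inv_into U \<phi> z" by blast
        then have "z \<in> D" using that by blast
        then obtain x where xW: "x \<in> W" and z: "z = \<phi> x" unfolding D_def by blast
        have xU: "x \<in> U" and xX: "x \<in> topspace X" and pxV: "\<pi> x \<in> V" using xW unfolding W_def by auto
        have tx: "t = x" using c(6)[OF xU] z t by simp
        have "w z = \<zeta>0" using const zb by blast
        then have "\<psi> (\<pi> x) = \<psi> y0" using \<zeta>0 c(6)[OF xU] z unfolding w_def by simp
        then have "\<pi> x = y0" using d(5) pxV y0V by (meson inj_onD)
        then show "t \<in> {x' \<in> topspace X. \<pi> x' = \<pi> x0}" using tx xX px0 by simp
      qed
      then have "finite (inv_into U \<phi> ` ball z0 r)" using finfib[OF x0X] finite_subset by blast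
      moreover have "inj_on (inv_into U \<phi>) (ball z0 r)"
        by (rule inj_on_inv_into) (use that in \<open>auto simp: D_def W_def\<close>)
      ultimately have "finite (ball z0 r)" using finite_imageD by blast
      then have "interior (ball z0 r) = {}" by (rule empty_interior_finite)
      then show False using \<open>r > 0\<close> by simp
    qed
    obtain r0 where r0: "r0 > 0" "ball z0 r0 \<subseteq> D" using oD z0D open_contains_ball by blast
    have dw: "(w has_field_derivative deriv w z) (at z)" if "z \<in> D" for z
      using holomorphic_derivI[OF hw oD that] .
    obtain r where r: "r > 0" "ball z0 r \<subseteq> D" and dnz: "\<And>z. z \<in> ball z0 r - {z0} \<Longrightarrow> deriv w z \<noteq> 0"
    proof -
      define g where "g = (\<lambda>z. (z - z0) * deriv w z)"
      have hg: "g holomorphic_on ball z0 r0" unfolding g_def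
        by (intro holomorphic_intros holomorphic_on_subset[OF holomorphic_deriv[OF hw oD] r0(2)])
      show ?thesis
      proof (cases "\<exists>\<beta>\<in>ball z0 r0. g \<beta> \<noteq> 0")
        case True
        then obtain \<beta> where "\<beta> \<in> ball z0 r0" "g \<beta> \<noteq> 0" by blast
        have "z0 \<in> ball z0 r0" using r0(1) by simp
        moreover have "g z0 = 0" unfolding g_def by simp
        ultimately obtain r where "0 < r" "ball z0 r \<subseteq> ball z0 r0" "\<And>z. z \<in> ball z0 r - {z0} \<Longrightarrow> g z \<noteq> 0"
          using isolated_zeros[OF hg open_ball connected_ball _ _ \<open>\<beta> \<in> ball z0 r0\<close> \<open>g \<beta> \<noteq> 0\<close>] by blast
        then show ?thesis using that[of r] r0(2) unfolding g_def by auto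
      next
        case False
        have "\<forall>x\<in>ball z0 r0 - {z0}. (w has_field_derivative 0) (at x)"
        proof
          fix x assume x: "x \<in> ball z0 r0 - {z0}"
          then have "deriv w x = 0" using False unfolding g_def by auto
          then show "(w has_field_derivative 0) (at x)" using dw[of x] x r0(2) by auto
        qed
        moreover have "continuous_on (ball z0 r0) w"
          using holomorphic_on_imp_continuous_on[OF holomorphic_on_subset[OF hw r0(2)]] .
        ultimately obtain k where k: "\<And>x. x \<in> ball z0 r0 \<Longrightarrow> w x = k"
          using DERIV_zero_connected_constant[OF connected_ball open_ball finite.emptyI[THEN finite.insertI, of z0]] by blast
        have "w z0 = k" using k r0(1) by simp
        then have "\<forall>z\<in>ball z0 r0. w z = \<zeta>0" using wz0 k by simp
        then show ?thesis using NC[OF r0] by blast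
      qed
    qed
    define BB where "BB = ball z0 r"
    have hB: "w holomorphic_on BB" unfolding BB_def by (rule holomorphic_on_subset[OF hw r(2)])
    have ncB: "\<not> w constant_on BB"
    proof
      assume "w constant_on BB"
      then obtain k where "\<And>z. z \<in> BB \<Longrightarrow> w z = k" unfolding constant_on_def by blast
      moreover have "z0 \<in> BB" using r(1) unfolding BB_def by simp
      ultimately have "k = \<zeta>0" using wz0 by simp
      with \<open>\<And>z. z \<in> BB \<Longrightarrow> w z = k\<close> have "\<forall>z\<in>ball z0 r. w z = \<zeta>0" unfolding BB_def by simp
      then show False using NC[OF r] by blast
    qed
    have omap: "open (w ` S)" if "open S" "S \<subseteq> BB" for S
      by (rule open_mapping_thm[OF hB _ _ that ncB]) (simp_all add: BB_def)
    define Om where "Om = w ` BB"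
    have oO: "open Om" unfolding Om_def by (rule omap) (simp_all add: BB_def)
    have z0O: "\<zeta>0 \<in> Om" unfolding Om_def BB_def using wz0 r(1) by force
    have BBD: "BB \<subseteq> D" using r(2) unfolding BB_def by simp
    have contF: "continuous_on Om F"
      unfolding continuous_on_open_invariant
    proof (intro allI impI)
      fix Q :: "complex set" assume oQ: "open Q"
      have cf: "continuous_on BB fh" using holomorphic_on_imp_continuous_on[OF holomorphic_on_subset[OF hf BBD]] .
      have o1: "open (fh -` Q \<inter> BB)" using continuous_on_open_vimage[OF open_ball, of z0 r fh] cf oQ unfolding BB_def by blast
      have "w ` (fh -` Q \<inter> BB) \<inter> Om = F -` Q \<inter> Om"
      proof (rule Set.set_eqI)
        fix \<zeta> show "\<zeta> \<in> w ` (fh -` Q \<inter> BB) \<inter> Om \<longleftrightarrow> \<zeta> \<in> F -` Q \<inter> Om"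
        proof
          assume "\<zeta> \<in> w ` (fh -` Q \<inter> BB) \<inter> Om"
          then obtain z where "z \<in> BB" "fh z \<in> Q" "\<zeta> = w z" "\<zeta> \<in> Om" by blast
          then show "\<zeta> \<in> F -` Q \<inter> Om" using key[of z] BBD by auto
        next
          assume "\<zeta> \<in> F -` Q \<inter> Om"
          then obtain z where "z \<in> BB" "\<zeta> = w z" "F \<zeta> \<in> Q" "\<zeta> \<in> Om" unfolding Om_def by blast
          then show "\<zeta> \<in> w ` (fh -` Q \<inter> BB) \<inter> Om" using key[of z] BBD by auto
        qed
      qed
      moreover have "open (w ` (fh -` Q \<inter> BB))" by (rule omap[OF o1]) blast
      ultimately show "\<exists>A. open A \<and> A \<inter> Om = F -` Q \<inter> Om" by blast
    qed
    have holF: "F holomorphic_on (Om - {\<zeta>0})"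
      unfolding holomorphic_on_open[OF open_delete[OF oO]]
    proof
      fix \<zeta> assume "\<zeta> \<in> Om - {\<zeta>0}"
      then obtain z1 where z1B: "z1 \<in> BB" and \<zeta>: "\<zeta> = w z1" and ne: "\<zeta> \<noteq> \<zeta>0" unfolding Om_def by blast
      have "z1 \<noteq> z0" using ne \<zeta> wz0 by blast
      then have dz1: "deriv w z1 \<noteq> 0" using dnz[of z1] z1B unfolding BB_def by simp
      have hB': "w holomorphic_on (BB - {z0})" by (rule holomorphic_on_subset[OF hB]) blast
      have oBd: "open (BB - {z0})" unfolding BB_def by (simp add: open_delete)
      have z1Bd: "z1 \<in> BB - {z0}" using z1B \<open>z1 \<noteq> z0\<close> by simp
      obtain r1 where r1: "r1 > 0" "ball z1 r1 \<subseteq> BB - {z0}" "inj_on w (ball z1 r1)"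
        by (rule has_complex_derivative_locally_injective[OF hB' z1Bd oBd dz1])
      have hb1: "w holomorphic_on ball z1 r1" by (rule holomorphic_on_subset[OF hB]) (use r1(2) in blast)
      obtain g where hg: "g holomorphic_on (w ` ball z1 r1)"
        and "\<And>z. z \<in> ball z1 r1 \<Longrightarrow> deriv w z * deriv g (w z) = 1"
        and gw: "\<And>z. z \<in> ball z1 r1 \<Longrightarrow> g (w z) = z"
        using holomorphic_has_inverse[OF hb1 open_ball r1(3)] by blast
      define E where "E = w ` ball z1 r1"
      have oE: "open E" unfolding E_def by (rule omap) (use r1(2) in auto)
      have \<zeta>E: "\<zeta> \<in> E" using \<zeta> r1(1) unfolding E_def by simp
      have sub: "g ` E \<subseteq> D"
      proof
        fix t assume "t \<in> g ` E"
        then obtain z where zb: "z \<in> ball z1 r1" and t: "t = g (w z)" unfolding E_def by blast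
        have "t = z" using gw[OF zb] t by simp
        then show "t \<in> D" using zb r1(2) BBD by blast
      qed
      have hfg: "(fh \<circ> g) holomorphic_on E"
        by (rule holomorphic_on_compose_gen[OF _ hf sub]) (simp add: E_def hg)
      define Hc where "Hc = fh \<circ> g"
      have eqE: "Hc \<zeta>' = F \<zeta>'" if zE: "\<zeta>' \<in> E" for \<zeta>'
      proof -
        obtain z where zb: "z \<in> ball z1 r1" and "\<zeta>' = w z" using zE unfolding E_def by blast
        have "z \<in> D" using zb r1(2) BBD by blast
        then show ?thesis using gw[OF zb] key[of z] \<open>\<zeta>' = w z\<close> unfolding Hc_def by simp
      qed
      have "Hc field_differentiable at \<zeta>"
        using hfg \<zeta>E oE unfolding Hc_def by (meson holomorphic_on_imp_differentiable_at)
      then have "F field_differentiable at \<zeta>" using diff_transform_open[OF oE \<zeta>E] eqE by blast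
      then show "\<exists>f'. (F has_field_derivative f') (at \<zeta>)" unfolding field_differentiable_def .
    qed
    have "F holomorphic_on Om"
      by (rule no_isolated_singularity[OF contF _ oO, of "{\<zeta>0}"]) (use holF in auto)
    then show "F field_differentiable at \<zeta>0" using oO z0O holomorphic_on_imp_differentiable_at by blast
  qed
  then show "((\<lambda>y. u (inv_into (topspace X) \<pi> y)) \<circ> inv_into V \<psi>) holomorphic_on \<psi> ` V"
    unfolding F_def[symmetric] holomorphic_on_open[OF d(2)] field_differentiable_def .
qed

lemma choose_N:
  fixes t :: real
  assumes "0 \<le> t" "t < 1"
  shows "\<exists>N. (1 + t ^ N) ^ m < 2"
proof -
  have "norm t < 1" using assms by simp
  then have "(\<lambda>N. t ^ N) \<longlonglongrightarrow> 0" by (rule LIMSEQ_power_zero)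
  then have "(\<lambda>N. 1 + t ^ N) \<longlonglongrightarrow> 1 + 0" by (rule tendsto_add[OF tendsto_const])
  then have "(\<lambda>N. (1 + t ^ N) ^ m) \<longlonglongrightarrow> (1 + 0) ^ m" by (rule tendsto_power)
  then have "(\<lambda>N. (1 + t ^ N) ^ m) \<longlonglongrightarrow> 1" by simp
  then have "eventually (\<lambda>N. (1 + t ^ N) ^ m < 2) sequentially"
    by (rule order_tendstoD(2)) simp
  then obtain N0 where "\<And>N. N \<ge> N0 \<Longrightarrow> (1 + t ^ N) ^ m < 2" unfolding eventually_sequentially by blast
  then show ?thesis by blast
qed

lemma select_k:
  fixes c :: "'g \<Rightarrow> complex"
  assumes T: "finite T" and g0: "g0 \<in> T" and rho: "0 \<le> \<rho>"
    and big: "(norm (c g0) + \<rho>) ^ card T < 2 * norm (c g0) ^ card T"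
  shows "\<exists>k<card T. coeff ([:\<rho>, 1:] ^ card T) k < norm (coeff (\<Prod>i\<in>T. [:- c i, 1:]) k)"
proof (rule ccontr)
  assume "\<not> ?thesis"
  then have "\<And>k. k < card T \<Longrightarrow> norm (coeff (\<Prod>i\<in>T. [:- c i, 1:]) k) \<le> coeff ([:\<rho>, 1:] ^ card T) k"
    by (meson not_less)
  from root_bound[OF T g0 rho this] big show False by simp
qed

lemma bij_mult_right:
  fixes G (structure)
  assumes "group G" "a \<in> carrier G"
  shows "bij_betw (\<lambda>g. g \<otimes> a) (carrier G) (carrier G)"
proof -
  interpret group G by fact
  show ?thesis
  proof (rule bij_betw_byWitness[where f'="\<lambda>g. g \<otimes> inv a"])
  show "\<forall>x\<in>carrier G. x \<otimes> a \<otimes> inv a = x" using assms(2) by (simp add: m_assoc)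
  show "\<forall>y\<in>carrier G. y \<otimes> inv a \<otimes> a = y" using assms(2) by (simp add: m_assoc)
  show "(\<lambda>g. g \<otimes> a) ` carrier G \<subseteq> carrier G" using assms(2) by auto
  show "(\<lambda>g. g \<otimes> inv a) ` carrier G \<subseteq> carrier G" using assms(2) by auto
  qed
qed

theorem lemma4p2:
  fixes X :: "'a topology" and A :: "('a set \<times> ('a \<Rightarrow> complex)) set"
    and Y :: "'b topology" and B :: "('b set \<times> ('b \<Rightarrow> complex)) set"
    and G (structure) and \<phi> :: "'g \<Rightarrow> 'a \<Rightarrow> 'a"
    and \<pi> :: "'a \<Rightarrow> 'b" and S' :: "'b set"
  assumes X: "open_riemann_surface X A"
    and grp: "group G" and fin: "finite (carrier G)"
    and act: "group_action G (topspace X) \<phi>"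
    and aut: "\<And>g. g \<in> carrier G \<Longrightarrow> holomorphic_automorphism X A (\<phi> g)"
    and trans: "\<And>C C'. C \<in> connected_components_of X \<Longrightarrow> C' \<in> connected_components_of X
                  \<Longrightarrow> \<exists>g\<in>carrier G. \<phi> g ` C = C'"
    and eff: "\<And>C g. C \<in> connected_components_of X \<Longrightarrow> g \<in> carrier G \<Longrightarrow> \<phi> g ` C = C
                  \<Longrightarrow> (\<forall>x\<in>C. \<phi> g x = x) \<Longrightarrow> g = \<one>"
    and Y: "riemann_surface Y B" and Yconn: "connected_space Y"
    and quot: "quotient_map X Y \<pi>"
    and fib: "\<And>x y. x \<in> topspace X \<Longrightarrow> y \<in> topspace X \<Longrightarrow>
                  (\<pi> x = \<pi> y \<longleftrightarrow> (\<exists>g\<in>carrier G. \<phi> g x = y))"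
    and hol: "holomorphic_map X A Y B \<pi>"
    and cpt: "compactin Y S'"
  shows "runge Y B S' \<longleftrightarrow> runge X A {x \<in> topspace X. \<pi> x \<in> S'}"
proof -
  interpret grp: group G by (rule grp)
  have AX: "complex_atlas X A" using X unfolding open_riemann_surface_def riemann_surface_def by blast
  have BY: "complex_atlas Y B" using Y unfolding riemann_surface_def by blast
  have surj: "\<pi> ` topspace X = topspace Y" using quot by (simp add: quotient_map_def)
  have pc: "continuous_map X Y \<pi>" using hol by (simp add: holomorphic_map_def)
  have pre: "\<exists>x\<in>topspace X. \<pi> x = y" if "y \<in> topspace Y" for y
  proof -
    have "y \<in> \<pi> ` topspace X" using that surj by simp
    then show ?thesis by blast
  qed
  have pY: "\<pi> x \<in> topspace Y" if "x \<in> topspace X" for x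
  proof -
    have "\<pi> x \<in> \<pi> ` topspace X" using that by blast
    then show ?thesis using surj by simp
  qed
  have gX: "\<phi> g x \<in> topspace X" if "g \<in> carrier G" "x \<in> topspace X" for g x
    using group_action.element_image[OF act that refl] .
  have comp: "\<phi> (g1 \<otimes> g2) x = \<phi> g1 (\<phi> g2 x)"
    if "x \<in> topspace X" "g1 \<in> carrier G" "g2 \<in> carrier G" for g1 g2 x
    using group_action.composition_rule[OF act that] .
  have oneq: "\<phi> \<one> = (\<lambda>x\<in>topspace X. x)" using group_action.id_eq_one[OF act] by simp
  have one: "\<phi> \<one> x = x" if "x \<in> topspace X" for x using oneq that by simp
  have gmap: "holomorphic_map X A X A (\<phi> g)" if "g \<in> carrier G" for g
    using aut[OF that] unfolding holomorphic_automorphism_def by blast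
  have gcont: "continuous_map X X (\<phi> g)" if "g \<in> carrier G" for g
    using gmap[OF that] unfolding holomorphic_map_def by blast
  have pinv: "\<pi> (\<phi> g x) = \<pi> x" if "g \<in> carrier G" "x \<in> topspace X" for g x
    using fib[OF that(2) gX[OF that]] that(1) by metis
  have finfib: "finite {x' \<in> topspace X. \<pi> x' = \<pi> x}" if xX: "x \<in> topspace X" for x
  proof -
    have "{x' \<in> topspace X. \<pi> x' = \<pi> x} \<subseteq> (\<lambda>g. \<phi> g x) ` carrier G"
    proof
      fix x' assume "x' \<in> {x' \<in> topspace X. \<pi> x' = \<pi> x}"
      then have "x' \<in> topspace X" "\<pi> x = \<pi> x'" by auto
      then obtain g where "g \<in> carrier G" "\<phi> g x = x'" using fib[OF xX] by blast
      then show "x' \<in> (\<lambda>g. \<phi> g x) ` carrier G" by blast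
    qed
    then show ?thesis using fin finite_subset by blast
  qed
  define S where "S = {x \<in> topspace X. \<pi> x \<in> S'}"
  have S'sub: "S' \<subseteq> topspace Y" using cpt compactin_subset_topspace by blast
  have cmap: "closed_map X Y \<pi>"
    unfolding closed_map_def
  proof (intro allI impI)
    fix C assume cC: "closedin X C"
    then have CX: "C \<subseteq> topspace X" by (rule closedin_subset)
    have sub: "\<pi> ` C \<subseteq> topspace Y" using CX pY by blast
    have eq: "{x \<in> topspace X. \<pi> x \<in> \<pi> ` C} = \<Union> ((\<lambda>g. {x \<in> topspace X. \<phi> g x \<in> C}) ` carrier G)"
    proof (rule Set.set_eqI)
      fix x
      show "x \<in> {x \<in> topspace X. \<pi> x \<in> \<pi> ` C} \<longleftrightarrow> x \<in> \<Union> ((\<lambda>g. {x \<in> topspace X. \<phi> g x \<in> C}) ` carrier G)"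
      proof
        assume "x \<in> {x \<in> topspace X. \<pi> x \<in> \<pi> ` C}"
        then obtain c where xX: "x \<in> topspace X" and cC': "c \<in> C" and pc': "\<pi> x = \<pi> c" by blast
        have "c \<in> topspace X" using cC' CX by blast
        then obtain g where "g \<in> carrier G" "\<phi> g x = c" using fib[OF xX] pc' by blast
        then show "x \<in> \<Union> ((\<lambda>g. {x \<in> topspace X. \<phi> g x \<in> C}) ` carrier G)" using xX cC' by blast
      next
        assume "x \<in> \<Union> ((\<lambda>g. {x \<in> topspace X. \<phi> g x \<in> C}) ` carrier G)"
        then obtain g where g: "g \<in> carrier G" and xX: "x \<in> topspace X" and "\<phi> g x \<in> C" by blast
        then have "\<pi> x \<in> \<pi> ` C" using pinv[OF g xX] by (metis image_eqI)
        then show "x \<in> {x \<in> topspace X. \<pi> x \<in> \<pi> ` C}" using xX by blast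
      qed
    qed
    have "closedin X (\<Union> ((\<lambda>g. {x \<in> topspace X. \<phi> g x \<in> C}) ` carrier G))"
    proof (rule closedin_Union)
      show "finite ((\<lambda>g. {x \<in> topspace X. \<phi> g x \<in> C}) ` carrier G)" using fin by simp
      show "\<And>T. T \<in> (\<lambda>g. {x \<in> topspace X. \<phi> g x \<in> C}) ` carrier G \<Longrightarrow> closedin X T"
        using closedin_continuous_map_preimage[OF gcont cC] by blast
    qed
    then have "closedin X {x \<in> topspace X. \<pi> x \<in> \<pi> ` C}" using eq by simp
    then show "closedin Y (\<pi> ` C)" using quot sub unfolding quotient_map_closedin by blast
  qed
  have proper: "proper_map X Y \<pi>"
    unfolding proper_map_def
  proof (intro conjI cmap ballI)
    fix y assume "y \<in> topspace Y"
    then obtain x where xX: "x \<in> topspace X" and "\<pi> x = y" using pre by blast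
    then show "compactin X {x \<in> topspace X. \<pi> x = y}"
      using finfib[OF xX] by (intro finite_imp_compactin) auto
  qed
  have cS: "compactin X S" unfolding S_def using compactin_proper_map_preimage[OF proper cpt] by simp
  show ?thesis
    unfolding S_def[symmetric]
  proof
    assume R: "runge Y B S'"
    show "runge X A S"
      unfolding runge_def
    proof (intro conjI cS ballI)
      fix p assume "p \<in> topspace X - S"
      then have pX: "p \<in> topspace X" and pS: "p \<notin> S" by auto
      have "\<pi> p \<in> topspace Y - S'" using pX pS pY[OF pX] unfolding S_def by blast
      then obtain h where hh: "holomorphic_fun Y B h" and hb: "\<forall>y\<in>S'. norm (h y) < norm (h (\<pi> p))"
        using R unfolding runge_def by blast
      have "holomorphic_fun X A (h \<circ> \<pi>)" by (rule holfun_comp[OF AX BY hol hh])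
      moreover have "\<forall>x\<in>S. norm ((h \<circ> \<pi>) x) < norm ((h \<circ> \<pi>) p)" using hb unfolding S_def by simp
      ultimately show "\<exists>h. holomorphic_fun X A h \<and> (\<forall>x\<in>S. norm (h x) < norm (h p))" by blast
    qed
  next
    assume R: "runge X A S"
    show "runge Y B S'"
      unfolding runge_def
    proof (intro conjI cpt ballI)
      fix q assume "q \<in> topspace Y - S'"
      then have qY: "q \<in> topspace Y" and qS: "q \<notin> S'" by auto
      then obtain p where pX: "p \<in> topspace X" and pq: "\<pi> p = q" using pre by blast
      have "p \<in> topspace X - S" using pX pq qS unfolding S_def by blast
      then obtain h where hh: "holomorphic_fun X A h" and hb: "\<forall>x\<in>S. norm (h x) < norm (h p)"
        using R unfolding runge_def by blast
      show "\<exists>v. holomorphic_fun Y B v \<and> (\<forall>y\<in>S'. norm (v y) < norm (v q))"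
      proof (cases "S = {}")
        case True
        have "S' = {}"
        proof (rule ccontr)
          assume "S' \<noteq> {}"
          then obtain y where "y \<in> S'" by blast
          then obtain x where "x \<in> topspace X" "\<pi> x = y" using S'sub pre by blast
          then show False using True \<open>y \<in> S'\<close> unfolding S_def by blast
        qed
        then show ?thesis using holfun_const[of Y B 1] by blast
      next
        case False
        have hc: "continuous_map X euclidean h" by (rule holfun_cont[OF AX hh])
        have "compactin euclidean (h ` S)" by (rule image_compactin[OF cS hc])
        then have "compact (h ` S)" by simp
        then have "compact (norm ` h ` S)" by (rule compact_continuous_image[OF continuous_on_norm_id])
        moreover have "norm ` h ` S \<noteq> {}" using False by simp
        ultimately obtain s where "s \<in> norm ` h ` S" and smax: "\<forall>t\<in>norm ` h ` S. t \<le> s"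
          using compact_attains_sup by blast
        then obtain xm where xmS: "xm \<in> S" and sxm: "s = norm (h xm)" by blast
        define M where "M = s"
        have Mb: "\<And>x. x \<in> S \<Longrightarrow> norm (h x) \<le> M" unfolding M_def using smax by blast
        have M0: "0 \<le> M" unfolding M_def using sxm by simp
        have Mp: "M < norm (h p)" unfolding M_def using hb xmS sxm by blast
        define hp where "hp = norm (h p)"
        have hp0: "0 < hp" using M0 Mp hp_def by linarith
        define t where "t = M / hp"
        have t0: "0 \<le> t" using M0 hp0 t_def by simp
        have t1: "t < 1" using Mp hp0 t_def hp_def by simp
        define m where "m = card (carrier G)"
        obtain N where N: "(1 + t ^ N) ^ m < 2" using choose_N[OF t0 t1] by blast
        define \<rho> where "\<rho> = M ^ N"
        define r where "r = hp ^ N"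
        have r0: "0 < r" using hp0 r_def by simp
        have rho0: "0 \<le> \<rho>" using M0 \<rho>_def by simp
        have "r + \<rho> = r * (1 + t ^ N)"
          using hp0 by (simp add: r_def \<rho>_def t_def power_divide field_simps)
        then have "(r + \<rho>) ^ m = r ^ m * (1 + t ^ N) ^ m" by (simp add: power_mult_distrib)
        also have "\<dots> < r ^ m * 2" using N r0 by simp
        finally have big0: "(r + \<rho>) ^ m < 2 * r ^ m" by simp
        define c where "c = (\<lambda>g x. h (\<phi> g x) ^ N)"
        have cp: "norm (c \<one> p) = r" unfolding c_def r_def hp_def using one[OF pX] by (simp add: norm_power)
        obtain k where km: "k < m" and kbig:
          "coeff ([:\<rho>, 1:] ^ card (carrier G)) k < norm (coeff (\<Prod>i\<in>carrier G. [:- c i p, 1:]) k)"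
          using select_k[OF fin grp.one_closed rho0, of "\<lambda>g. c g p"] big0 cp m_def by auto
        define u where "u = (\<lambda>x. coeff (\<Prod>i\<in>carrier G. [:- c i x, 1:]) k)"
        have hu: "holomorphic_fun X A u"
          unfolding u_def
        proof (rule holfun_coeff[OF fin])
          fix g assume g: "g \<in> carrier G"
          have "holomorphic_fun X A (\<lambda>x. (h \<circ> \<phi> g) x ^ N)"
            by (rule holfun_power[OF holfun_comp[OF AX AX gmap[OF g] hh]])
          then show "holomorphic_fun X A (c g)" unfolding c_def by (simp add: o_def)
        qed
        have uinv: "u x = u x'" if xX: "x \<in> topspace X" and x'X: "x' \<in> topspace X" and pxx: "\<pi> x = \<pi> x'" for x x'
        proof -
          obtain g0 where g0: "g0 \<in> carrier G" and x': "\<phi> g0 x = x'" using fib[OF xX x'X] pxx by blast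
          have "(\<Prod>i\<in>carrier G. [:- c i x', 1:]) = (\<Prod>i\<in>carrier G. [:- c (i \<otimes> g0) x, 1:])"
          proof (rule prod.cong[OF refl])
            fix i assume i: "i \<in> carrier G"
            show "[:- c i x', 1:] = [:- c (i \<otimes> g0) x, 1:]" unfolding c_def using comp[OF xX i g0] x' by simp
          qed
          also have "\<dots> = (\<Prod>i\<in>carrier G. [:- c i x, 1:])"
            by (rule prod.reindex_bij_betw[OF bij_mult_right[OF grp g0], of "\<lambda>i. [:- c i x, 1:]"])
          finally show ?thesis unfolding u_def by simp
        qed
        have hv: "holomorphic_fun Y B (\<lambda>y. u (inv_into (topspace X) \<pi> y))"
          by (rule descend[OF AX BY surj hol finfib hu uinv])
        have vq: "u (inv_into (topspace X) \<pi> q) = u p"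
        proof -
          have qim: "q \<in> \<pi> ` topspace X" using pX pq by blast
          show ?thesis using uinv[OF inv_into_into[OF qim] pX] f_inv_into_f[OF qim] pq by simp
        qed
        have up: "coeff ([:\<rho>, 1:] ^ card (carrier G)) k < norm (u p)" using kbig u_def by simp
        have vS: "norm (u (inv_into (topspace X) \<pi> y)) \<le> coeff ([:\<rho>, 1:] ^ card (carrier G)) k" if yS: "y \<in> S'" for y
        proof -
          have yim: "y \<in> \<pi> ` topspace X" using yS S'sub surj by auto
          define x where "x = inv_into (topspace X) \<pi> y"
          have xX: "x \<in> topspace X" unfolding x_def by (rule inv_into_into[OF yim])
          have px: "\<pi> x = y" unfolding x_def by (rule f_inv_into_f[OF yim])
          have "norm (c g x) \<le> \<rho>" if g: "g \<in> carrier G" for g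
          proof -
            have "\<phi> g x \<in> S" using gX[OF g xX] pinv[OF g xX] px yS unfolding S_def by simp
            then have "norm (h (\<phi> g x)) \<le> M" by (rule Mb)
            then show ?thesis unfolding c_def \<rho>_def by (simp add: norm_power power_mono)
          qed
          then have "norm (coeff (\<Prod>i\<in>carrier G. [:- c i x, 1:]) k) \<le> coeff ([:\<rho>, 1:] ^ card (carrier G)) k"
            by (rule coeff_prod_lin_bound[OF fin])
          then show ?thesis unfolding u_def x_def by simp
        qed
        show ?thesis
        proof (intro exI conjI ballI)
          show "holomorphic_fun Y B (\<lambda>y. u (inv_into (topspace X) \<pi> y))" by (rule hv)
          fix y assume "y \<in> S'"
          show "norm (u (inv_into (topspace X) \<pi> y)) < norm (u (inv_into (topspace X) \<pi> q))"
            using vS[OF \<open>y \<in> S'\<close>] up vq by simp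
        qed
      qed
    qed
  qed
qed

end
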